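(* Let $V$ be a Hermitian positive definite $m\times m$ matrix such that $\hat L^\dagger(\mathbf{k})V\hat L(\mathbf{k})$ is nonsingular for every nonzero $\mathbf{k}\in\mathbb{R}^d$, set $\Gamma(\mathbf{k})=\hat L(\mathbf{k})\big(\hat L^\dagger(\mathbf{k})V\hat L(\mathbf{k})\big)^{-1}\hat L^\dagger(\mathbf{k})$ and $\Delta(\mathbf{k})=V-V\Gamma(\mathbf{k})V$. Let $\mathbf{v}\in\mathbb{C}^m$ and suppose $\alpha=\sup_{\mathbf{k}\in\mathbb{R}^d,\mathbf{k}\neq 0}\mathbf{v}\cdot\Gamma(\mathbf{k})\mathbf{v}$ is finite and positive. Let $S=V-\mathbf{v}\mathbf{v}^\dagger/\alpha$ and $f(\mathbf{E})=\mathbf{E}\cdot S\mathbf{E}$. Let $\mathbf{k}\neq 0$ be such that $\mathbf{v}\cdot\Gamma(\mathbf{k})\mathbf{v}=\alpha$. Then the set of $\mathbf{G}\in\mathbb{C}^\ell$ with $f(\hat L(\mathbf{k})\mathbf{G})=0$ consists exactly of the vectors $\mathbf{G}=a\big(\hat L^\dagger(\mathbf{k})V\hat L(\mathbf{k})\big)^{-1}\hat L^\dagger(\mathbf{k})\mathbf{v}$ with $a\in\mathbb{C}$; for such $\mathbf{G}$, $\mathbf{H}=\hat L(\mathbf{k})\mathbf{G}=a\Gamma(\mathbf{k})\mathbf{v}$ satisfies $S\mathbf{H}=-a\Delta(\mathbf{k})V^{-1}\mathbf{v}$, and $\hat L^\dagger(\mathbf{k})\Delta(\mathbf{k})=0$,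 so that $S\mathbf{H}$ lies in the null space of $\hat L^\dagger(\mathbf{k})$.
   Context: Fix integers $d,\ell,m,t\ge 1$ and complex constants $A_{rq}$, $A^{a_1\ldots a_h}_{rqh}$ ($1\le r\le m$, $1\le q\le \ell$, $1\le h\le t$, $1\le a_i\le d$). For $\mathbf{k}\in\mathbb{R}^d$, $\hat L(\mathbf{k})$ is the $m\times\ell$ matrix with entries $A_{rq}+\sum_{h=1}^t\sum_{a_1,\ldots,a_h=1}^d i^hA^{a_1\ldots a_h}_{rqh}k_{a_1}\cdots k_{a_h}$ (the symbol of the differential operator $L_{rq}=A_{rq}+\sum_h\sum A^{a_1\ldots a_h}_{rqh}\partial_{x_{a_1}}\cdots\partial_{x_{a_h}}$), and $\hat L^\dagger(\mathbf{k})$ is its conjugate transpose; $\mathbf{v}^\dagger$ is the conjugate transpose of $\mathbf{v}$. For $\mathbf{a},\mathbf{b}\in\mathbb{C}^m$, $\mathbf{a}\cdot\mathbf{b}=\sum_r\overline{a_r}b_r$. *)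

theory Defs
  imports "HOL-Analysis.Analysis"
begin

text \<open>Dimensions d, l (ell), m are encoded by finite index types 'd, 'l, 'm.
  Complex m x l matrices are complex^'l^'m (rows indexed by 'm).\<close>

definition ctrans :: "complex^'c^'r \<Rightarrow> complex^'r^'c" where
  "ctrans M = (\<chi> i j. cnj (M $ j $ i))"

definition cdot :: "complex^'n \<Rightarrow> complex^'n \<Rightarrow> complex" where
  "cdot a b = (\<Sum>r\<in>UNIV. cnj (a $ r) * b $ r)"

definition herm_posdef :: "complex^'n^'n \<Rightarrow> bool" where
  "herm_posdef V \<longleftrightarrow> ctrans V = V \<and>
     (\<forall>x. x \<noteq> 0 \<longrightarrow> 0 < Re (cdot x (V *v x)))"

text \<open>The symbol L-hat(k) of the differential operator with coefficients
  A0 r q = A_{rq} and Ah r q h as = A^{a_1...a_h}_{rqh} (as = [a_1,...,a_h]).\<close>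
definition symbol ::
  "('m \<Rightarrow> 'l \<Rightarrow> complex) \<Rightarrow> ('m \<Rightarrow> 'l \<Rightarrow> nat \<Rightarrow> 'd list \<Rightarrow> complex) \<Rightarrow> nat
     \<Rightarrow> real^'d \<Rightarrow> complex^'l^'m" where
  "symbol A0 Ah t k = (\<chi> r q. A0 r q +
      (\<Sum>h\<in>{1..t}. \<Sum>as\<in>{as::('d::finite) list. length as = h}.
          \<i> ^ h * Ah r q h as * (\<Prod>a\<leftarrow>as. complex_of_real (k $ a))))"

definition Gam :: "complex^'l^'m \<Rightarrow> complex^'m^'m \<Rightarrow> complex^'m^'m" where
  "Gam L V = L ** matrix_inv (ctrans L ** V ** L) ** ctrans L"

definition Del :: "complex^'l^'m \<Rightarrow> complex^'m^'m \<Rightarrow> complex^'m^'m" where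
  "Del L V = V - V ** Gam L V ** V"

end

theory Submission imports Defs begin

lemma minv:
  fixes A :: "'a::semiring_1^'n^'m"
  assumes "invertible A" shows "A ** matrix_inv A = mat 1" "matrix_inv A ** A = mat 1"
proof -
  have "\<exists>A'::'a^'m^'n. A ** A' = mat 1 \<and> A' ** A = mat 1" using assms by (simp add: invertible_def)
  from someI_ex[OF this] show "A ** matrix_inv A = mat 1" "matrix_inv A ** A = mat 1"
    by (simp_all add: matrix_inv_def)
qed

lemma mv_smult: "(A::'a::comm_ring_1^'n^'m) *v (c *s x) = c *s (A *v x)"
  by (simp add: vec_eq_iff matrix_vector_mult_def sum_distrib_left mult.left_commute)

lemma cdot_adj: "cdot x (A *v y) = cdot (ctrans A *v x) y"
  unfolding cdot_def ctrans_def matrix_vector_mult_def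
  apply (simp add: sum_distrib_left sum_distrib_right cnj_sum mult_ac)
  by (rule sum.swap)

lemma ctrans_mult: "ctrans (A ** B) = ctrans B ** ctrans A"
  unfolding ctrans_def matrix_matrix_mult_def
  by (simp add: vec_eq_iff cnj_sum mult.commute)

lemma ctrans_ctrans[simp]: "ctrans (ctrans A) = A"
  by (simp add: ctrans_def vec_eq_iff)

lemma cdot_sym: "cdot y x = cnj (cdot x y)"
  by (simp add: cdot_def cnj_sum mult.commute)

lemma cdot_add_r: "cdot x (y + z) = cdot x y + cdot x z"
  by (simp add: cdot_def distrib_left sum.distrib)
lemma cdot_diff_r: "cdot x (y - z) = cdot x y - cdot x z"
  by (simp add: cdot_def right_diff_distrib sum_subtractf)
lemma cdot_diff_l: "cdot (x - y) z = cdot x z - cdot y z"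
  by (simp add: cdot_def left_diff_distrib sum_subtractf)
lemma cdot_smult_r: "cdot x (c *s y) = c * cdot x y"
  by (simp add: cdot_def sum_distrib_left mult_ac)
lemma cdot_smult_l: "cdot (c *s x) y = cnj c * cdot x y"
  by (simp add: cdot_def sum_distrib_left mult_ac)
lemma cdot_0[simp]: "cdot x 0 = 0" "cdot 0 x = 0"
  by (simp_all add: cdot_def)


theorem mainTheorem4:
  fixes A0 :: "'m::finite \<Rightarrow> 'l::finite \<Rightarrow> complex"
    and Ah :: "'m \<Rightarrow> 'l \<Rightarrow> nat \<Rightarrow> ('d::finite) list \<Rightarrow> complex"
    and t :: nat
    and V :: "complex^'m^'m"
    and v :: "complex^'m"
    and \<alpha> :: real
    and k :: "real^'d"
  assumes t: "t \<ge> 1"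
    and V: "herm_posdef V"
    and nonsing: "\<forall>k'::real^'d. k' \<noteq> 0 \<longrightarrow>
          invertible (ctrans (symbol A0 Ah t k') ** V ** symbol A0 Ah t k')"
    and bdd: "bdd_above {Re (cdot v (Gam (symbol A0 Ah t k') V *v v)) | k'::real^'d. k' \<noteq> 0}"
    and alpha: "\<alpha> = Sup {Re (cdot v (Gam (symbol A0 Ah t k') V *v v)) | k'::real^'d. k' \<noteq> 0}"
    and alpha_pos: "\<alpha> > 0"
    and k: "k \<noteq> 0"
    and kmax: "cdot v (Gam (symbol A0 Ah t k) V *v v) = complex_of_real \<alpha>"
  shows "let L = symbol A0 Ah t k;
             S = (\<chi> i j. V $ i $ j - v $ i * cnj (v $ j) / complex_of_real \<alpha>);
             f = (\<lambda>E. cdot E (S *v E));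
             M = ctrans L ** V ** L
         in {G. f (L *v G) = 0} = {a *s (matrix_inv M *v (ctrans L *v v)) | a. True}
          \<and> (\<forall>a. let H = L *v (a *s (matrix_inv M *v (ctrans L *v v))) in
                 H = a *s (Gam L V *v v)
               \<and> S *v H = - (a *s (Del L V *v (matrix_inv V *v v)))
               \<and> ctrans L *v (S *v H) = 0)
          \<and> ctrans L ** Del L V = 0"
proof -
  define L where "L = symbol A0 Ah t k"
  define M where "M = ctrans L ** V ** L"
  define S where "S = (\<chi> i j. V $ i $ j - v $ i * cnj (v $ j) / complex_of_real \<alpha>)"
  define u where "u = matrix_inv M *v (ctrans L *v v)"
  have Minv: "invertible M" using nonsing k by (simp add: M_def L_def)
  have VH: "ctrans V = V" and Vpos: "\<And>x. x \<noteq> 0 \<Longrightarrow> 0 < Re (cdot x (V *v x))"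
    using V by (auto simp: herm_posdef_def)
  have MH: "ctrans M = M" by (simp add: M_def ctrans_mult matrix_mul_assoc VH)
  have Mu: "M *v u = ctrans L *v v"
    by (simp add: u_def matrix_vector_mul_assoc matrix_mul_assoc minv(1)[OF Minv])
  have Mv: "\<And>y. M *v y = ctrans L *v (V *v (L *v y))"
    by (simp add: M_def matrix_vector_mul_assoc matrix_mul_assoc)
  have F2: "\<And>x y. cdot x (M *v y) = cdot (L *v x) (V *v (L *v y))"
    by (simp add: Mv cdot_adj)
  have Mherm: "\<And>x y. cdot x (M *v y) = cnj (cdot y (M *v x))"
    by (metis MH cdot_adj cdot_sym)
  have F3: "\<And>y. cdot u (M *v y) = cdot v (L *v y)"
    by (metis MH Mu cdot_adj)
  have Gv: "Gam L V *v v = L *v u"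
    unfolding Gam_def u_def M_def by (simp add: matrix_vector_mul_assoc matrix_mul_assoc)
  have alpha_u: "cdot u (M *v u) = of_real \<alpha>"
    using kmax F3[of u] Gv by (simp add: L_def)
  have an0: "complex_of_real \<alpha> \<noteq> 0" using alpha_pos by simp
  have cnja: "cnj (complex_of_real \<alpha>) = complex_of_real \<alpha>" by simp
  have Sv: "\<And>E. S *v E = V *v E - (cdot v E / of_real \<alpha>) *s v"
    by (simp add: S_def vec_eq_iff matrix_vector_mult_def cdot_def sum_subtractf
        left_diff_distrib right_diff_distrib sum_distrib_left sum_divide_distrib mult_ac)
  have fE: "\<And>G. cdot (L *v G) (S *v (L *v G)) =
      cdot G (M *v G) - cdot u (M *v G) * cnj (cdot u (M *v G)) / of_real \<alpha>"
    unfolding F3 apply (simp add: Sv cdot_diff_r cdot_smult_r F2)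
    using cdot_sym by blast
  have key: "\<And>G c. cdot (G - c *s u) (M *v (G - c *s u)) =
      cdot G (M *v G) - c * cnj (cdot u (M *v G)) - cnj c * cdot u (M *v G) + cnj c * c * of_real \<alpha>"
    apply (simp add: matrix_vector_mult_diff_distrib mv_smult cdot_diff_l cdot_diff_r
        cdot_smult_l cdot_smult_r alpha_u algebra_simps)
    by (metis Mherm)
  have zero: "\<And>w. cdot w (M *v w) = 0 \<Longrightarrow> w = 0"
  proof -
    fix w assume "cdot w (M *v w) = 0"
    hence "cdot (L *v w) (V *v (L *v w)) = 0" by (simp add: F2)
    hence "L *v w = 0" using Vpos by fastforce
    hence "M *v w = 0" by (simp add: Mv)
    hence "matrix_inv M *v (M *v w) = 0" by simp
    thus "w = 0" by (simp add: matrix_vector_mul_assoc minv(2)[OF Minv])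
  qed
  have set: "{G. cdot (L *v G) (S *v (L *v G)) = 0} = {a *s u | a. True}"
  proof (intro set_eqI iffI)
    fix G assume "G \<in> {G. cdot (L *v G) (S *v (L *v G)) = 0}"
    hence f0: "cdot (L *v G) (S *v (L *v G)) = 0" by simp
    define c where "c = cdot u (M *v G) / of_real \<alpha>"
    have "cdot (G - c *s u) (M *v (G - c *s u)) = cdot (L *v G) (S *v (L *v G))"
      unfolding key fE c_def using an0 by (simp add: field_simps)
    with f0 have "cdot (G - c *s u) (M *v (G - c *s u)) = 0" by simp
    hence "G - c *s u = 0" by (rule zero)
    thus "G \<in> {a *s u | a. True}" by auto
  next
    fix G assume "G \<in> {a *s u | a. True}"
    then obtain a where G: "G = a *s u" by auto
    show "G \<in> {G. cdot (L *v G) (S *v (L *v G)) = 0}"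
      using an0 by (simp add: G fE mv_smult cdot_smult_l cdot_smult_r alpha_u field_simps)
  qed
  have Vinj: "inj ((*v) V)"
  proof (rule injI)
    fix x y assume "V *v x = V *v y"
    hence "V *v (x - y) = 0" by (simp add: matrix_vector_mult_diff_distrib)
    thus "x = y" using Vpos[of "x - y"] by (cases "x - y = 0") auto
  qed
  have Vinv: "invertible V"
    using Vinj matrix_left_invertible_injective invertible_left_inverse by blast
  have VV: "\<And>x. V *v (matrix_inv V *v x) = x"
    by (simp add: matrix_vector_mul_assoc minv(1)[OF Vinv])
  have Hs: "\<And>a. L *v (a *s u) = a *s (Gam L V *v v)" by (simp add: Gv mv_smult)
  have SH: "\<And>a. S *v (L *v (a *s u)) = - (a *s (Del L V *v (matrix_inv V *v v)))"
  proof -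
    fix a
    have "Del L V *v (matrix_inv V *v v) = v - V *v (L *v u)"
      unfolding Del_def
      by (simp add: matrix_vector_mult_diff_rdistrib matrix_vector_mul_assoc[symmetric]
          VV Gv[symmetric])
    moreover have "S *v (L *v (a *s u)) = a *s (V *v (L *v u)) - a *s v"
      using an0 by (simp add: Sv mv_smult cdot_smult_r F3[symmetric] alpha_u vector_smult_assoc)
    ultimately show "S *v (L *v (a *s u)) = - (a *s (Del L V *v (matrix_inv V *v v)))"
      by (simp only:) (simp add: vec_eq_iff algebra_simps)
  qed
  have LD: "ctrans L ** Del L V = 0"
  proof -
    have "\<And>x. (ctrans L ** Del L V) *v x = 0 *v x"
    proof -
      fix x
      have "(ctrans L ** Del L V) *v x = ctrans L *v (V *v x) -
          M *v (matrix_inv M *v (ctrans L *v (V *v x)))"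
        unfolding Del_def Gam_def M_def
        by (simp add: matrix_vector_mult_diff_rdistrib matrix_vector_mult_diff_distrib
            matrix_vector_mul_assoc[symmetric])
      also have "\<dots> = 0" by (simp add: matrix_vector_mul_assoc matrix_mul_assoc minv(1)[OF Minv])
      finally show "(ctrans L ** Del L V) *v x = 0 *v x" by simp
    qed
    thus ?thesis using matrix_eq by blast
  qed
  have LS: "\<And>a. ctrans L *v (S *v (L *v (a *s u))) = 0"
    unfolding SH unfolding vector_smult_lneg[symmetric] mv_smult matrix_vector_mul_assoc
    by (simp add: matrix_mul_assoc LD)
  show ?thesis
    unfolding Let_def L_def[symmetric] M_def[symmetric] S_def[symmetric] u_def[symmetric]
    apply (intro conjI allI)
       apply (rule set)
      apply (rule Hs)
     apply (rule SH)
    apply (rule LS)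
    apply (rule LD)
    done
qed

end
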